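(* Let $g\colon\mathbb{R}^d\to[0,\infty)$ be a bounded non-negative function with $\|g\|_\infty\ge1$, and suppose $g\le\ell_u$ pointwise for some $u\in\mathbb{R}^d$ with $0<|u|<1$. Then \[ g^\circ(u)\ge \frac{g^\circ(0)}{e}. \]
   Context: The height function is $\hbar(x)=\sqrt{1-|x|^2}$ for $|x|\le1$ and $\hbar(x)=0$ otherwise. For $|u|<1$, $\ell_u(x)=\hbar(u)\exp\!\big(-\frac{1}{\hbar^2(u)}\langle u,x-u\rangle\big)$. The polar function of a non-negative function $g$ is $g^\circ(p)=\inf_{\{x: g(x)>0\}}\frac{e^{-\langle p,x\rangle}}{g(x)}$. $\|\cdot\|_\infty$ is the supremum norm. *)

theory Defs
  imports "HOL-Analysis.Analysis"
begin

definition hbar :: "'a::euclidean_space \<Rightarrow> real" where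
  "hbar x = (if norm x \<le> 1 then sqrt (1 - (norm x)\<^sup>2) else 0)"

definition ell :: "'a::euclidean_space \<Rightarrow> 'a \<Rightarrow> real" where
  "ell u x = hbar u * exp (- (1 / (hbar u)\<^sup>2) * (u \<bullet> (x - u)))"

definition polar :: "('a::euclidean_space \<Rightarrow> real) \<Rightarrow> 'a \<Rightarrow> real" where
  "polar g p = (INF x\<in>{x. g x > 0}. exp (- (p \<bullet> x)) / g x)"

definition sup_norm :: "('a \<Rightarrow> real) \<Rightarrow> real" where
  "sup_norm g = (SUP x. \<bar>g x\<bar>)"

end

theory Submission
  imports Defs
begin

theorem lemma3p6:
  fixes g :: "'a::euclidean_space \<Rightarrow> real" and u :: 'a
  assumes nonneg: "\<And>x. g x \<ge> 0"
    and bdd: "bdd_above (range g)"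
    and norm_ge: "sup_norm g \<ge> 1"
    and u_pos: "0 < norm u" and u_lt: "norm u < 1"
    and le_ell: "\<And>x. g x \<le> ell u x"
  shows "polar g u \<ge> polar g 0 / exp 1"
proof -
  have absg: "(\<lambda>x. \<bar>g x\<bar>) = g" using nonneg by (simp add: abs_of_nonneg)
  have "1/2 < (SUP x. g x)" using norm_ge unfolding sup_norm_def absg by simp
  then obtain y where y: "1/2 < g y" proof -
    have "\<exists>x\<in>UNIV. 1/2 < g x" using less_cSUP_iff[OF _ bdd, of "1/2"] \<open>1/2 < (SUP x. g x)\<close> by simp
    then show ?thesis using that by blast
  qed
  let ?S = "{x. g x > 0}"
  have yS: "y \<in> ?S" using y by simp
  have bdd0: "bdd_below ((\<lambda>x. exp (- ((0::'a) \<bullet> x)) / g x) ` ?S)"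
    by (rule bdd_belowI[where m=0]) auto
  have p0le: "polar g 0 \<le> 1 / g x" if "x \<in> ?S" for x
    unfolding polar_def using cINF_lower[OF bdd0 that] by simp
  have p0_2: "polar g 0 \<le> 2" proof -
    have "1 / g y < 2" using y by (simp add: divide_less_eq)
    thus ?thesis using p0le[OF yS] by linarith
  qed
  define h where "h = sqrt (1 - (norm u)\<^sup>2)"
  have h2: "h\<^sup>2 = 1 - (norm u)\<^sup>2" unfolding h_def using u_lt
    by (simp add: abs_square_le_1 less_imp_le)
  have hpos: "h > 0" unfolding h_def using u_lt by (simp add: abs_square_less_1)
  have hle: "h \<le> 1" unfolding h_def by simp
  have ellx: "ell u x = h * exp (- (1 / h\<^sup>2) * (u \<bullet> x - (norm u)\<^sup>2))" for x
    unfolding ell_def hbar_def h_def using u_lt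
    by (simp add: inner_diff_right power2_norm_eq_inner)
  show ?thesis unfolding polar_def[of g u]
  proof (rule cINF_greatest)
    show "?S \<noteq> {}" using yS by blast
  next
    fix x assume xS: "x \<in> ?S"
    hence gx: "g x > 0" by simp
    show "polar g 0 / exp 1 \<le> exp (- (u \<bullet> x)) / g x"
    proof (cases "u \<bullet> x \<le> 1")
      case True
      have "exp (-1) \<le> exp (- (u \<bullet> x))" using True by simp
      hence "exp (-1) / g x \<le> exp (- (u \<bullet> x)) / g x" using gx
        by (simp add: divide_right_mono)
      moreover have "polar g 0 / exp 1 \<le> exp (-1) / g x"
        using p0le[OF xS] by (simp add: exp_minus field_simps divide_right_mono)
      ultimately show ?thesis by linarith
    next
      case False
      let ?t = "u \<bullet> x"
      have nu: "(norm u)\<^sup>2 > 0" using u_pos by simp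
      have "?t * (1 - (norm u)\<^sup>2) \<le> ?t - (norm u)\<^sup>2"
        using False nu by (simp add: algebra_simps)
      moreover have "h\<^sup>2 > 0" using hpos by simp
      ultimately have "?t \<le> (?t - (norm u)\<^sup>2) / h\<^sup>2" using h2
        by (simp add: le_divide_eq)
      hence "exp (- (1 / h\<^sup>2) * (?t - (norm u)\<^sup>2)) \<le> exp (- ?t)" by simp
      moreover have "h * exp (- (1 / h\<^sup>2) * (?t - (norm u)\<^sup>2)) \<le> exp (- (1 / h\<^sup>2) * (?t - (norm u)\<^sup>2))"
        using hle by (simp add: mult_left_le_one_le less_imp_le hpos)
      ultimately have "ell u x \<le> exp (- ?t)" unfolding ellx by linarith
      hence "g x \<le> exp (- ?t)" using le_ell[of x] by linarith
      hence "1 \<le> exp (- ?t) / g x" using gx by simp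
      moreover have "polar g 0 / exp 1 \<le> 1" proof -
        have "2 \<le> exp (1::real)" using exp_ge_add_one_self[of 1] by simp
        thus ?thesis using p0_2 by (simp add: divide_le_eq)
      qed
      ultimately show ?thesis by linarith
    qed
  next
  qed
qed

end
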